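(* For $n\in\mathbb{N}$, let $X_1,\dots,X_n$ be i.i.d. random lifetimes distributed as $X$, having finite cumulative information generating measure $H_X$ and cumulative residual information generating measure $K_X$. Let $X_{(n:n)}=\max\{X_1,\dots,X_n\}$ and $X_{(1:n)}=\min\{X_1,\dots,X_n\}$. Then $$G_{X_{(n:n)}}(\alpha,\beta)=\sum_{i=0}^\infty(-1)^i\binom{\beta}{i}H_X(n(i+\alpha))\qquad\text{for all }(\alpha,\beta)\in D_{X_{(n:n)}},$$ $$G_{X_{(1:n)}}(\alpha,\beta)=\sum_{j=0}^\infty(-1)^j\binom{\alpha}{j}K_X(n(j+\beta))\qquad\text{for all }(\alpha,\beta)\in D_{X_{(1:n)}}.$$
   Context: Random lifetimes are nonnegative random variables. For a random variable $Z$ with CDF $F$ and survival function $\overline F=1-F$, with $l=\inf\{x:F(x)>0\}$, $r=\sup\{x:\overline F(x)>0\}$, the CIGF is $G_Z(\alpha,\beta)=\int_l^r [F(x)]^\alpha[\overline F(x)]^\beta\,dx$ on $D_Z=\{(\alpha,\beta)\in\mathbb{R}^2: G_Z(\alpha,\beta)<\infty\}$; $H_Z(\alpha)=\int_l^r[F(x)]^\alpha dx$ and $K_Z(\beta)=\int_l^r[\overline F(x)]^\beta dx$. The generalized binomial coefficient is $\binom{\alpha}{n}=\alpha(\alpha-1)\cdots(\alpha-n+1)/n!$. *)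

theory Defs
  imports "HOL-Probability.Probability"
begin

definition cdf_rv :: "'a measure \<Rightarrow> ('a \<Rightarrow> real) \<Rightarrow> real \<Rightarrow> real" where
  "cdf_rv M Z x = measure M {\<omega> \<in> space M. Z \<omega> \<le> x}"

definition lend :: "(real \<Rightarrow> real) \<Rightarrow> ereal" where
  "lend F = Inf {ereal x | x. F x > 0}"

definition rend :: "(real \<Rightarrow> real) \<Rightarrow> ereal" where
  "rend F = Sup {ereal x | x. 1 - F x > 0}"

definition supp_int :: "(real \<Rightarrow> real) \<Rightarrow> real set" where
  "supp_int F = {x. lend F < ereal x \<and> ereal x < rend F}"

definition CIGF :: "'a measure \<Rightarrow> ('a \<Rightarrow> real) \<Rightarrow> real \<Rightarrow> real \<Rightarrow> ennreal" where
  "CIGF M Z \<alpha> \<beta> = (let F = cdf_rv M Z in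
     \<integral>\<^sup>+ x \<in> supp_int F. ennreal (F x powr \<alpha> * (1 - F x) powr \<beta>) \<partial>lborel)"

definition CIGF_H :: "'a measure \<Rightarrow> ('a \<Rightarrow> real) \<Rightarrow> real \<Rightarrow> ennreal" where
  "CIGF_H M Z \<alpha> = (let F = cdf_rv M Z in
     \<integral>\<^sup>+ x \<in> supp_int F. ennreal (F x powr \<alpha>) \<partial>lborel)"

definition CIGF_K :: "'a measure \<Rightarrow> ('a \<Rightarrow> real) \<Rightarrow> real \<Rightarrow> ennreal" where
  "CIGF_K M Z \<beta> = (let F = cdf_rv M Z in
     \<integral>\<^sup>+ x \<in> supp_int F. ennreal ((1 - F x) powr \<beta>) \<partial>lborel)"

end

theory Submission
  imports Defs
begin

lemma cdf_ident:
  assumes P: "prob_space M" and i: "distr M borel Y = distr M borel X"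
    and X: "X \<in> borel_measurable M" and Y: "Y \<in> borel_measurable M"
  shows "measure M (Y -` {..x} \<inter> space M) = cdf_rv M X x"
proof -
  have "measure M (Y -` {..x} \<inter> space M) = measure (distr M borel Y) {..x}"
    using Y by (simp add: measure_distr)
  also have "\<dots> = measure (distr M borel X) {..x}" using i by simp
  also have "\<dots> = measure M (X -` {..x} \<inter> space M)" using X by (simp add: measure_distr)
  also have "\<dots> = cdf_rv M X x" unfolding cdf_rv_def by (intro arg_cong[where f="measure M"]) auto
  finally show ?thesis .
qed

lemma cdf_maxmin:
  assumes P: "prob_space M" and n: "n \<ge> 1"
    and ind: "prob_space.indep_vars M (\<lambda>_. borel) Xs {..<n}"
    and d: "\<forall>i<n. distr M borel (Xs i) = distr M borel X" and X: "X \<in> borel_measurable M"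
  shows "cdf_rv M (\<lambda>\<omega>. Max ((\<lambda>i. Xs i \<omega>) ` {..<n})) x = cdf_rv M X x ^ n"
    and "cdf_rv M (\<lambda>\<omega>. Min ((\<lambda>i. Xs i \<omega>) ` {..<n})) x = 1 - (1 - cdf_rv M X x) ^ n"
proof -
  interpret prob_space M by fact
  have rv: "\<And>i. i < n \<Longrightarrow> Xs i \<in> borel_measurable M"
    using ind unfolding indep_vars_def2 by auto
  have IS: "indep_sets (\<lambda>i. {Xs i -` A \<inter> space M | A. A \<in> sets borel}) {..<n}"
    using ind unfolding indep_vars_def2 by auto
  have ne: "{..<n} \<noteq> {}" using n by (simp add: lessThan_empty_iff)
  have mem1: "\<And>j. Xs j -` {..x} \<inter> space M \<in> {Xs j -` A \<inter> space M | A. A \<in> sets (borel::real measure)}" unfolding mem_Collect_eq by (intro exI[of _ "{..x}"]) simp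
  have mem2: "\<And>j. Xs j -` {x<..} \<inter> space M \<in> {Xs j -` A \<inter> space M | A. A \<in> sets (borel::real measure)}" unfolding mem_Collect_eq by (intro exI[of _ "{x<..}"]) simp
  have e: "\<And>i. i < n \<Longrightarrow> prob (Xs i -` {..x} \<inter> space M) = cdf_rv M X x"
    using cdf_ident[OF P] d X rv by blast
  have e2: "\<And>i. i < n \<Longrightarrow> prob (Xs i -` {x<..} \<inter> space M) = 1 - cdf_rv M X x"
  proof -
    fix i assume "i < n"
    have "Xs i -` {x<..} \<inter> space M = space M - (Xs i -` {..x} \<inter> space M)" by auto
    moreover have "Xs i -` {..x} \<inter> space M \<in> events" using rv[OF \<open>i<n\<close>] by measurable
    ultimately show "prob (Xs i -` {x<..} \<inter> space M) = 1 - cdf_rv M X x"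
      using prob_compl e[OF \<open>i<n\<close>] by simp
  qed
  have "{\<omega>\<in>space M. Max ((\<lambda>i. Xs i \<omega>) ` {..<n}) \<le> x} = (\<Inter>i\<in>{..<n}. Xs i -` {..x} \<inter> space M)"
    using ne by (auto simp: Max_le_iff)
  then have "cdf_rv M (\<lambda>\<omega>. Max ((\<lambda>i. Xs i \<omega>) ` {..<n})) x = prob (\<Inter>i\<in>{..<n}. Xs i -` {..x} \<inter> space M)"
    unfolding cdf_rv_def by simp
  also have "\<dots> = (\<Prod>i\<in>{..<n}. prob (Xs i -` {..x} \<inter> space M))"
    by (rule indep_setsD[OF IS]) (use ne mem1 in simp_all)
  also have "\<dots> = (\<Prod>i\<in>{..<n}. cdf_rv M X x)" using e by simp
  finally show "cdf_rv M (\<lambda>\<omega>. Max ((\<lambda>i. Xs i \<omega>) ` {..<n})) x = cdf_rv M X x ^ n" by simp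
  have I: "(\<Inter>i\<in>{..<n}. Xs i -` {x<..} \<inter> space M) \<in> events"
    using rv ne by (intro sets.finite_INT) auto
  have "{\<omega>\<in>space M. Min ((\<lambda>i. Xs i \<omega>) ` {..<n}) \<le> x} = space M - (\<Inter>i\<in>{..<n}. Xs i -` {x<..} \<inter> space M)"
    using ne by (auto simp: Min_le_iff not_le)
  then have "cdf_rv M (\<lambda>\<omega>. Min ((\<lambda>i. Xs i \<omega>) ` {..<n})) x = 1 - prob (\<Inter>i\<in>{..<n}. Xs i -` {x<..} \<inter> space M)"
    unfolding cdf_rv_def using prob_compl[OF I] by simp
  also have "prob (\<Inter>i\<in>{..<n}. Xs i -` {x<..} \<inter> space M) = (\<Prod>i\<in>{..<n}. prob (Xs i -` {x<..} \<inter> space M))"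
    by (rule indep_setsD[OF IS]) (use ne mem2 in simp_all)
  also have "\<dots> = (\<Prod>i\<in>{..<n}. 1 - cdf_rv M X x)" using e2 by simp
  finally show "cdf_rv M (\<lambda>\<omega>. Min ((\<lambda>i. Xs i \<omega>) ` {..<n})) x = 1 - (1 - cdf_rv M X x) ^ n" by simp
qed

lemma gchoose_sign:
  fixes b :: real
  obtains N :: nat and s :: real where "\<bar>s\<bar> = 1" "\<And>i. i \<ge> N \<Longrightarrow> s * ((-1)^i * (b gchoose i)) \<ge> 0"
proof -
  define c where "c i = (-1)^i * (b gchoose i)" for i
  have rec: "c (Suc i) = c i * ((real i - b) / real (Suc i))" for i
  proof -
    have "b * (b gchoose i) = real i * (b gchoose i) + real (Suc i) * (b gchoose (Suc i))"
      using gbinomial_mult_1[of b i] by simp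
    then have h: "(b gchoose (Suc i)) = (b - real i) * (b gchoose i) / real (Suc i)"
      by (simp add: field_simps)
    show ?thesis unfolding c_def h by (simp add: field_simps)
  qed
  define N where "N = nat \<lceil>b\<rceil>"
  define s :: real where "s = (if c N \<ge> 0 then 1 else -1)"
  have "s * c i \<ge> 0" if "i \<ge> N" for i
    using that
  proof (induction i rule: dec_induct)
    case base
    then show ?case by (auto simp: s_def)
  next
    case (step i)
    have "real i \<ge> b" using step(1) unfolding N_def by linarith
    then have "(real i - b) / real (Suc i) \<ge> 0" by simp
    then have "0 \<le> (s * c i) * ((real i - b) / real (Suc i))" using step(3) by (rule mult_nonneg_nonneg[rotated])
    then show ?case by (simp only: rec mult.assoc)
  qed
  moreover have "\<bar>s\<bar> = 1" by (simp add: s_def)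
  ultimately show ?thesis using that unfolding c_def by blast
qed


lemma pw:
  fixes t b a :: real assumes t: "0 < t" "t < 1"
  shows "(\<lambda>i. (-1)^i * (b gchoose i) * t powr (real i + a)) sums ((1 - t) powr b * t powr a)"
    and "summable (\<lambda>i. \<bar>(-1)^i * (b gchoose i) * t powr (real i + a)\<bar>)"
proof -
  have e: "t powr (real i + a) = t ^ i * t powr a" for i
    using t by (simp add: powr_add powr_realpow)
  have e2: "(b gchoose n) * (-t)^n * t powr a = (-1)^n * (b gchoose n) * t powr (real n + a)" for n
    unfolding e power_minus[of t n] by (simp only: mult.assoc mult.left_commute)
  have "(\<lambda>n. (b gchoose n) * (-t)^n) sums (1 + -t) powr b"
    using t by (intro gen_binomial_real) simp
  from sums_mult2[OF this, of "t powr a"]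
  show "(\<lambda>i. (-1)^i * (b gchoose i) * t powr (real i + a)) sums ((1 - t) powr b * t powr a)"
    unfolding e2 by simp
  have "summable (\<lambda>n. (b gchoose n) * (-(1+t)/2)^n)"
    using t by (intro sums_summable[OF gen_binomial_real]) simp
  from powser_insidea[OF this, of t]
  have "summable (\<lambda>n. norm ((b gchoose n) * t ^ n))" using t by simp
  from summable_mult2[OF this, of "t powr a"]
  have "summable (\<lambda>n. \<bar>b gchoose n\<bar> * t ^ n * t powr a)" using t by (simp add: abs_mult)
  moreover have "\<bar>(-1)^i * (b gchoose i) * t powr (real i + a)\<bar> = \<bar>b gchoose i\<bar> * t ^ i * t powr a" for i
    unfolding e using t by (simp add: abs_mult)
  ultimately show "summable (\<lambda>i. \<bar>(-1)^i * (b gchoose i) * t powr (real i + a)\<bar>)" by simp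
qed

lemma pw_bound:
  fixes t b a s :: real assumes t: "0 < t" "t < 1" and s: "\<bar>s\<bar> = 1"
    and sg: "\<And>i. i \<ge> N \<Longrightarrow> s * ((-1)^i * (b gchoose i)) \<ge> 0"
  shows "(\<Sum>i. \<bar>(-1)^i * (b gchoose i) * t powr (real i + a)\<bar>)
     \<le> (\<Sum>i<N. 2 * \<bar>(-1)^i * (b gchoose i)\<bar> * t powr (real i + a)) + (1 - t) powr b * t powr a"
proof -
  define c where "c i = (-1)^i * (b gchoose i)" for i
  define v where "v i = c i * t powr (real i + a)" for i
  define V where "V = (1 - t) powr b * t powr a"
  have vs: "v sums V" using pw(1)[OF t, of b a] unfolding v_def c_def V_def .
  have us: "(\<lambda>i. \<bar>v i\<bar>) sums (\<Sum>i. \<bar>v i\<bar>)"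
    using pw(2)[OF t, of b a] unfolding v_def c_def by (simp add: summable_sums)
  have d1: "(\<lambda>i. \<bar>v i\<bar> - s * v i) sums ((\<Sum>i. \<bar>v i\<bar>) - s * V)"
    by (intro sums_diff us sums_mult vs)
  have "\<bar>v i\<bar> - s * v i = 0" if "i \<notin> {..<N}" for i
  proof -
    have "s * c i \<ge> 0" using sg[of i] that unfolding c_def by simp
    moreover have "\<bar>v i\<bar> = \<bar>s * c i\<bar> * t powr (real i + a)" unfolding v_def using s by (simp add: abs_mult)
    ultimately show ?thesis unfolding v_def by simp
  qed
  then have d2: "(\<lambda>i. \<bar>v i\<bar> - s * v i) sums (\<Sum>i<N. \<bar>v i\<bar> - s * v i)"
    by (intro sums_finite) auto
  have eq: "(\<Sum>i. \<bar>v i\<bar>) - s * V = (\<Sum>i<N. \<bar>v i\<bar> - s * v i)"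
    using sums_unique2[OF d1 d2] .
  have "(\<Sum>i<N. \<bar>v i\<bar> - s * v i) \<le> (\<Sum>i<N. 2 * \<bar>c i\<bar> * t powr (real i + a))"
  proof (intro sum_mono)
    fix i
    have "- (s * v i) \<le> \<bar>s * v i\<bar>" by linarith
    also have "\<bar>s * v i\<bar> = \<bar>v i\<bar>" using s by (simp add: abs_mult)
    finally show "\<bar>v i\<bar> - s * v i \<le> 2 * \<bar>c i\<bar> * t powr (real i + a)"
      unfolding v_def by (simp add: abs_mult)
  qed
  moreover have "s * V \<le> V"
  proof -
    have "V \<ge> 0" unfolding V_def by simp
    then show ?thesis using s by (cases "s \<ge> 0") auto
  qed
  ultimately show ?thesis using eq unfolding v_def c_def V_def by linarith
qed


lemma setnn_to_L:
  fixes h :: "real \<Rightarrow> real"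
  assumes S: "S \<in> sets borel" and h: "h \<in> borel_measurable borel" and nn: "\<And>x. 0 \<le> h x"
    and fin: "(\<integral>\<^sup>+x\<in>S. ennreal (h x) \<partial>lborel) < \<infinity>"
  shows "integrable lborel (\<lambda>x. indicator S x * h x)"
    and "enn2real (\<integral>\<^sup>+x\<in>S. ennreal (h x) \<partial>lborel) = (\<integral>x. indicator S x * h x \<partial>lborel)"
proof -
  have eq: "(\<integral>\<^sup>+x\<in>S. ennreal (h x) \<partial>lborel) = (\<integral>\<^sup>+x. ennreal (indicator S x * h x) \<partial>lborel)"
    by (intro nn_integral_cong) (auto simp: indicator_def)
  show I: "integrable lborel (\<lambda>x. indicator S x * h x)"
    using fin nn S h unfolding eq by (intro integrableI_nonneg) auto
  have "(\<integral>\<^sup>+x. ennreal (indicator S x * h x) \<partial>lborel) = ennreal (\<integral>x. indicator S x * h x \<partial>lborel)"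
    using nn by (intro nn_integral_eq_integral I) auto
  moreover have "(\<integral>x. indicator S x * h x \<partial>lborel) \<ge> 0" using nn by (intro Bochner_Integration.integral_nonneg) auto
  ultimately show "enn2real (\<integral>\<^sup>+x\<in>S. ennreal (h x) \<partial>lborel) = (\<integral>x. indicator S x * h x \<partial>lborel)"
    unfolding eq by simp
qed




lemma core:
  fixes g :: "real \<Rightarrow> real" and S :: "real set" and a b :: real
  assumes S: "S \<in> sets borel" and g: "g \<in> borel_measurable borel"
    and gS: "\<And>x. x \<in> S \<Longrightarrow> 0 < g x \<and> g x < 1"
    and A: "(\<integral>\<^sup>+x\<in>S. ennreal ((1 - g x) powr b * g x powr a) \<partial>lborel) < \<infinity>"
    and B: "\<And>i::nat. (\<integral>\<^sup>+x\<in>S. ennreal (g x powr (real i + a)) \<partial>lborel) < \<infinity>"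
  shows "(\<lambda>i. (-1)^i * (b gchoose i) * enn2real (\<integral>\<^sup>+x\<in>S. ennreal (g x powr (real i + a)) \<partial>lborel))
           sums enn2real (\<integral>\<^sup>+x\<in>S. ennreal ((1 - g x) powr b * g x powr a) \<partial>lborel)"
proof -
  define c where "c i = (-1)^i * (b gchoose i)" for i :: nat
  obtain N s where s: "\<bar>s\<bar> = 1" and sg: "\<And>i. i \<ge> N \<Longrightarrow> s * ((-1)^i * (b gchoose i)) \<ge> 0"
    using gchoose_sign by blast
  define f where "f i x = indicator S x * (c i * g x powr (real i + a))" for i x
  have intB: "integrable lborel (\<lambda>x. indicator S x * g x powr (real i + a))" for i
    using setnn_to_L(1)[OF S _ _ B[of i]] g by simp
  have eqB: "enn2real (\<integral>\<^sup>+x\<in>S. ennreal (g x powr (real i + a)) \<partial>lborel)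
      = (\<integral>x. indicator S x * g x powr (real i + a) \<partial>lborel)" for i
    using setnn_to_L(2)[OF S _ _ B[of i]] g by simp
  have intA: "integrable lborel (\<lambda>x. indicator S x * ((1 - g x) powr b * g x powr a))"
    using setnn_to_L(1)[OF S _ _ A] g by simp
  have eqA: "enn2real (\<integral>\<^sup>+x\<in>S. ennreal ((1 - g x) powr b * g x powr a) \<partial>lborel)
      = (\<integral>x. indicator S x * ((1 - g x) powr b * g x powr a) \<partial>lborel)"
    using setnn_to_L(2)[OF S _ _ A] g by simp
  have fi: "f i = (\<lambda>x. c i * (indicator S x * g x powr (real i + a)))" for i
    unfolding f_def by (auto simp: fun_eq_iff)
  have intf: "integrable lborel (f i)" for i
    unfolding fi by (intro integrable_mult_right intB)
  have sumx: "summable (\<lambda>i. norm (f i x))" for x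
  proof (cases "x \<in> S")
    case True
    then show ?thesis using pw(2)[of "g x" b a] gS[OF True] unfolding f_def c_def by simp
  next
    case False
    then show ?thesis unfolding f_def by simp
  qed
  define Bd where "Bd x = indicator S x * (\<Sum>i<N. 2 * \<bar>c i\<bar> * g x powr (real i + a))
      + indicator S x * ((1 - g x) powr b * g x powr a)" for x
  have intBd: "integrable lborel Bd"
  proof -
    have "integrable lborel (\<lambda>x. \<Sum>i<N. 2 * \<bar>c i\<bar> * (indicator S x * g x powr (real i + a)))"
      by (rule Bochner_Integration.integrable_sum, rule integrable_mult_right, rule intB)
    moreover have "(\<lambda>x. \<Sum>i<N. 2 * \<bar>c i\<bar> * (indicator S x * g x powr (real i + a)))
        = (\<lambda>x. indicator S x * (\<Sum>i<N. 2 * \<bar>c i\<bar> * g x powr (real i + a)))"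
      by (auto simp: fun_eq_iff sum_distrib_left mult_ac)
    ultimately have I1: "integrable lborel (\<lambda>x. indicator S x * (\<Sum>i<N. 2 * \<bar>c i\<bar> * g x powr (real i + a)))"
      by simp
    show ?thesis unfolding Bd_def by (rule Bochner_Integration.integrable_add[OF I1 intA])
  qed
  have bnd: "(\<Sum>i. norm (f i x)) \<le> Bd x" for x
  proof (cases "x \<in> S")
    case True
    then show ?thesis using pw_bound[of "g x" s N b a] gS[OF True] s sg
      unfolding f_def c_def Bd_def by simp
  next
    case False
    then show ?thesis unfolding f_def Bd_def by simp
  qed
  have sumI: "summable (\<lambda>i. (\<integral>x. norm (f i x) \<partial>lborel))"
  proof (rule bounded_imp_summable)
    fix m
    have "(\<Sum>k\<le>m. (\<integral>x. norm (f k x) \<partial>lborel)) = (\<integral>x. (\<Sum>k\<le>m. norm (f k x)) \<partial>lborel)"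
      by (intro Bochner_Integration.integral_sum[symmetric] integrable_norm intf)
    also have "\<dots> \<le> (\<integral>x. Bd x \<partial>lborel)"
    proof (intro integral_mono Bochner_Integration.integrable_sum integrable_norm intf intBd)
      fix x
      show "(\<Sum>k\<le>m. norm (f k x)) \<le> Bd x"
        using sum_le_suminf[OF sumx[of x], of "{..m}"] bnd[of x] by simp
    qed
    finally show "(\<Sum>k\<le>m. (\<integral>x. norm (f k x) \<partial>lborel)) \<le> (\<integral>x. Bd x \<partial>lborel)" .
  qed simp
  have main: "(\<lambda>i. integral\<^sup>L lborel (f i)) sums (\<integral>x. (\<Sum>i. f i x) \<partial>lborel)"
    by (rule sums_integral[OF intf _ sumI]) (use sumx in \<open>intro AE_I2\<close>)
  have sf: "(\<Sum>i. f i x) = indicator S x * ((1 - g x) powr b * g x powr a)" for x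
  proof (cases "x \<in> S")
    case True
    then show ?thesis using sums_unique[OF pw(1)[of "g x" b a]] gS[OF True]
      unfolding f_def c_def by simp
  next
    case False
    then show ?thesis unfolding f_def by simp
  qed
  have fI: "integral\<^sup>L lborel (f i) = c i * (\<integral>x. indicator S x * g x powr (real i + a) \<partial>lborel)" for i
    unfolding fi by simp
  have L: "(\<lambda>i. integral\<^sup>L lborel (f i)) = (\<lambda>i. (-1)^i * (b gchoose i) * enn2real (\<integral>\<^sup>+x\<in>S. ennreal (g x powr (real i + a)) \<partial>lborel))"
    by (simp only: fI eqB c_def)
  have R: "(\<integral>x. (\<Sum>i. f i x) \<partial>lborel) = enn2real (\<integral>\<^sup>+x\<in>S. ennreal ((1 - g x) powr b * g x powr a) \<partial>lborel)"
    by (simp only: sf eqA)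
  show ?thesis using main unfolding L R .
qed

lemma set_nn_cong:
  "(\<And>x. x \<in> S \<Longrightarrow> f x = g x) \<Longrightarrow> (\<integral>\<^sup>+x\<in>S. f x \<partial>M) = (\<integral>\<^sup>+x\<in>S. g x \<partial>M)"
  by (intro nn_integral_cong) (auto simp: indicator_def)

lemma supp_eq:
  "(\<And>x. G x > 0 \<longleftrightarrow> F x > 0) \<Longrightarrow> (\<And>x. 1 - G x > 0 \<longleftrightarrow> 1 - F x > 0) \<Longrightarrow> supp_int G = supp_int F"
  by (simp add: supp_int_def lend_def rend_def)

lemma supp_bounds:
  assumes mono: "mono F" and x: "x \<in> supp_int F"
  shows "0 < F x \<and> F x < 1"
proof
  have "Inf {ereal y | y. F y > 0} < ereal x" using x by (simp add: supp_int_def lend_def)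
  then obtain z where "z \<in> {ereal y | y. F y > 0}" "z < ereal x" by (auto simp: Inf_less_iff)
  then obtain y where "F y > 0" "y < x" by auto
  then show "0 < F x" using mono by (smt (verit) monoD)
next
  have "ereal x < Sup {ereal y | y. 1 - F y > 0}" using x by (simp add: supp_int_def rend_def)
  then obtain z where "z \<in> {ereal y | y. 1 - F y > 0}" "ereal x < z" by (auto simp: less_Sup_iff)
  then obtain y where "1 - F y > 0" "x < y" by auto
  then show "F x < 1" using mono by (smt (verit) monoD)
qed

lemma supp_sets: "supp_int F \<in> sets borel"
proof -
  have "supp_int F = {x. lend F < ereal x} \<inter> {x. ereal x < rend F}"
    by (auto simp: supp_int_def)
  moreover have "open {x. lend F < ereal x}"
    by (intro open_Collect_less continuous_on_const continuous_on_ereal continuous_on_id)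
  moreover have "open {x. ereal x < rend F}"
    by (intro open_Collect_less continuous_on_const continuous_on_ereal continuous_on_id)
  ultimately show ?thesis by auto
qed

lemma cdf_props:
  assumes P: "prob_space M" and X: "X \<in> borel_measurable M"
  shows "mono (cdf_rv M X)" "\<And>x. 0 \<le> cdf_rv M X x" "\<And>x. cdf_rv M X x \<le> 1"
proof -
  interpret prob_space M by fact
  show "mono (cdf_rv M X)"
  proof (rule monoI)
    fix x y :: real assume "x \<le> y"
    then show "cdf_rv M X x \<le> cdf_rv M X y" unfolding cdf_rv_def
      using X by (intro finite_measure_mono) (auto, measurable)
  qed
  show "\<And>x. 0 \<le> cdf_rv M X x" unfolding cdf_rv_def by simp
  show "\<And>x. cdf_rv M X x \<le> 1" unfolding cdf_rv_def by simp
qed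

theorem proposition10:
  fixes M :: "'a measure" and X :: "'a \<Rightarrow> real" and Xs :: "nat \<Rightarrow> 'a \<Rightarrow> real" and n :: nat
  assumes "prob_space M"
    and "n \<ge> 1"
    and "X \<in> borel_measurable M"
    and "\<forall>\<omega>\<in>space M. X \<omega> \<ge> 0"
    and "\<forall>i<n. \<forall>\<omega>\<in>space M. Xs i \<omega> \<ge> 0"
    and "prob_space.indep_vars M (\<lambda>_. borel) Xs {..<n}"
    and "\<forall>i<n. distr M borel (Xs i) = distr M borel X"
  shows
    "(\<forall>\<alpha> \<beta>. CIGF M (\<lambda>\<omega>. Max ((\<lambda>i. Xs i \<omega>) ` {..<n})) \<alpha> \<beta> < \<infinity> \<longrightarrow>
        (\<forall>i::nat. CIGF_H M X (real n * (real i + \<alpha>)) < \<infinity>) \<longrightarrow>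
        (\<lambda>i. (-1) ^ i * (\<beta> gchoose i) * enn2real (CIGF_H M X (real n * (real i + \<alpha>))))
          sums enn2real (CIGF M (\<lambda>\<omega>. Max ((\<lambda>i. Xs i \<omega>) ` {..<n})) \<alpha> \<beta>))
     \<and>
     (\<forall>\<alpha> \<beta>. CIGF M (\<lambda>\<omega>. Min ((\<lambda>i. Xs i \<omega>) ` {..<n})) \<alpha> \<beta> < \<infinity> \<longrightarrow>
        (\<forall>j::nat. CIGF_K M X (real n * (real j + \<beta>)) < \<infinity>) \<longrightarrow>
        (\<lambda>j. (-1) ^ j * (\<alpha> gchoose j) * enn2real (CIGF_K M X (real n * (real j + \<beta>))))
          sums enn2real (CIGF M (\<lambda>\<omega>. Min ((\<lambda>i. Xs i \<omega>) ` {..<n})) \<alpha> \<beta>))"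
proof -
  note P = assms(1) and n = assms(2) and Xm = assms(3) and ind = assms(6) and d = assms(7)
  define F where "F = cdf_rv M X"
  define S where "S = supp_int F"
  have mF: "mono F" and F0: "\<And>x. 0 \<le> F x" and F1: "\<And>x. F x \<le> 1"
    using cdf_props[OF P Xm] unfolding F_def by auto
  have Fmeas: "F \<in> borel_measurable borel" using borel_measurable_mono[OF mF] .
  have SS: "S \<in> sets borel" unfolding S_def by (rule supp_sets)
  have FS: "\<And>x. x \<in> S \<Longrightarrow> 0 < F x \<and> F x < 1" unfolding S_def using supp_bounds[OF mF] by blast
  have n0: "n > 0" using n by simp
  have pos_iff: "\<And>t::real. 0 \<le> t \<Longrightarrow> (0 < t ^ n \<longleftrightarrow> 0 < t)"
    using n0 by (metis less_eq_real_def zero_less_power power_0_left not_gr_zero)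
  have Fmax: "cdf_rv M (\<lambda>\<omega>. Max ((\<lambda>i. Xs i \<omega>) ` {..<n})) = (\<lambda>x. F x ^ n)"
    using cdf_maxmin(1)[OF P n ind d Xm] unfolding F_def by auto
  have Fmin: "cdf_rv M (\<lambda>\<omega>. Min ((\<lambda>i. Xs i \<omega>) ` {..<n})) = (\<lambda>x. 1 - (1 - F x) ^ n)"
    using cdf_maxmin(2)[OF P n ind d Xm] unfolding F_def by auto
  have Smax: "supp_int (\<lambda>x. F x ^ n) = S" unfolding S_def
  proof (rule supp_eq)
    fix x
    show "0 < F x ^ n \<longleftrightarrow> 0 < F x" using pos_iff[OF F0[of x]] .
    show "0 < 1 - F x ^ n \<longleftrightarrow> 0 < 1 - F x" using power_less_one_iff[OF F0[of x], of n] n0 by auto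
  qed
  have Smin: "supp_int (\<lambda>x. 1 - (1 - F x) ^ n) = S" unfolding S_def
  proof (rule supp_eq)
    fix x
    have h: "0 \<le> 1 - F x" using F1[of x] by simp
    show "0 < 1 - (1 - F x) ^ n \<longleftrightarrow> 0 < F x" using power_less_one_iff[OF h, of n] n0 by auto
    show "0 < 1 - (1 - (1 - F x) ^ n) \<longleftrightarrow> 0 < 1 - F x" using pos_iff[OF h] by simp
  qed
  show ?thesis
  proof (intro conjI allI impI)
    fix \<alpha> \<beta> :: real
    assume A: "CIGF M (\<lambda>\<omega>. Max ((\<lambda>i. Xs i \<omega>) ` {..<n})) \<alpha> \<beta> < \<infinity>"
      and B: "\<forall>i::nat. CIGF_H M X (real n * (real i + \<alpha>)) < \<infinity>"
    define g where "g x = F x ^ n" for x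
    have gS: "\<And>x. x \<in> S \<Longrightarrow> 0 < g x \<and> g x < 1"
    proof -
      fix x assume "x \<in> S"
      then have "0 < F x" "F x < 1" using FS by auto
      then show "0 < g x \<and> g x < 1" unfolding g_def using n0 by (auto simp: power_less_one_iff)
    qed
    have eqA: "CIGF M (\<lambda>\<omega>. Max ((\<lambda>i. Xs i \<omega>) ` {..<n})) \<alpha> \<beta>
        = (\<integral>\<^sup>+x\<in>S. ennreal ((1 - g x) powr \<beta> * g x powr \<alpha>) \<partial>lborel)"
      unfolding CIGF_def Let_def Fmax Smax g_def by (intro set_nn_cong) (simp add: mult.commute)
    have eqB: "CIGF_H M X (real n * (real i + \<alpha>)) = (\<integral>\<^sup>+x\<in>S. ennreal (g x powr (real i + \<alpha>)) \<partial>lborel)" for i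
      unfolding CIGF_H_def Let_def F_def[symmetric] S_def[symmetric] g_def
    proof (intro set_nn_cong)
      fix x assume "x \<in> S"
      then have "0 < F x" using FS by blast
      then show "ennreal (F x powr (real n * (real i + \<alpha>))) = ennreal ((F x ^ n) powr (real i + \<alpha>))"
        by (simp add: powr_powr[symmetric] powr_realpow)
    qed
    have gm: "g \<in> borel_measurable borel" unfolding g_def using Fmeas by measurable
    show "(\<lambda>i. (-1) ^ i * (\<beta> gchoose i) * enn2real (CIGF_H M X (real n * (real i + \<alpha>))))
          sums enn2real (CIGF M (\<lambda>\<omega>. Max ((\<lambda>i. Xs i \<omega>) ` {..<n})) \<alpha> \<beta>)"
      unfolding eqA eqB
      by (rule core[OF SS gm gS]) (use A B eqA eqB in auto)
  next
    fix \<alpha> \<beta> :: real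
    assume A: "CIGF M (\<lambda>\<omega>. Min ((\<lambda>i. Xs i \<omega>) ` {..<n})) \<alpha> \<beta> < \<infinity>"
      and B: "\<forall>j::nat. CIGF_K M X (real n * (real j + \<beta>)) < \<infinity>"
    define g where "g x = (1 - F x) ^ n" for x
    have gS: "\<And>x. x \<in> S \<Longrightarrow> 0 < g x \<and> g x < 1"
    proof -
      fix x assume "x \<in> S"
      then have "0 < 1 - F x" "1 - F x < 1" using FS by auto
      then show "0 < g x \<and> g x < 1" unfolding g_def using n0 by (auto simp: power_less_one_iff)
    qed
    have eqA: "CIGF M (\<lambda>\<omega>. Min ((\<lambda>i. Xs i \<omega>) ` {..<n})) \<alpha> \<beta>
        = (\<integral>\<^sup>+x\<in>S. ennreal ((1 - g x) powr \<alpha> * g x powr \<beta>) \<partial>lborel)"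
      unfolding CIGF_def Let_def Fmin Smin g_def by (intro set_nn_cong) simp
    have eqB: "CIGF_K M X (real n * (real j + \<beta>)) = (\<integral>\<^sup>+x\<in>S. ennreal (g x powr (real j + \<beta>)) \<partial>lborel)" for j
      unfolding CIGF_K_def Let_def F_def[symmetric] S_def[symmetric] g_def
    proof (intro set_nn_cong)
      fix x assume "x \<in> S"
      then have "0 < 1 - F x" using FS by auto
      then show "ennreal ((1 - F x) powr (real n * (real j + \<beta>))) = ennreal (((1 - F x) ^ n) powr (real j + \<beta>))"
        by (simp add: powr_powr[symmetric] powr_realpow)
    qed
    have gm: "g \<in> borel_measurable borel" unfolding g_def using Fmeas by measurable
    show "(\<lambda>j. (-1) ^ j * (\<alpha> gchoose j) * enn2real (CIGF_K M X (real n * (real j + \<beta>))))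
          sums enn2real (CIGF M (\<lambda>\<omega>. Min ((\<lambda>i. Xs i \<omega>) ` {..<n})) \<alpha> \<beta>)"
      unfolding eqA eqB
      by (rule core[OF SS gm gS]) (use A B eqA eqB in auto)
  qed
qed

end
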